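(* Let $K\subseteq\mathbb{R}^n$ be a nonempty open convex set and $h:K\to\mathbb{R}$ a continuously differentiable function. If $h$ is strongly quasiconvex with modulus $\gamma>0$ on $K$, then $h$ is CFZ-strongly quasiconvex on $K$.
   Context: For a convex set $\emptyset\neq K\subseteq\mathbb{R}^n$ and $\gamma> 0$, $h:K\to\mathbb{R}$ is strongly quasiconvex with modulus $\gamma$ on $K$ if $h(ty+(1-t)x)\le \max\{h(y),h(x)\}-t(1-t)\frac{\gamma}{2}\|x-y\|^2$ for all $x,y\in K$, $t\in[0,1]$. For $t\in\mathbb{R}$, $S_t(h):=\{x\in K: h(x)\le t\}$; $\mathcal{B}(\bar x,\rho)$ is the open Euclidean ball. Given $\alpha\in\mathbb{R}$, $h$ is $\alpha$-quasiconvex at $\bar x\in K$ if there exist $\rho>0$ and $e\in\mathbb{R}^n$ with $\|e\|=1$ such that for all $y\in K\cap\mathcal{B}(\bar x,\rho)\cap S_{h(\bar x)}(h)$ one has $\langle e,y-\bar x\rangle\ge \alpha\|y-\bar x\|^2$. The function $h$ is CFZ-strongly quasiconvex on $K$ if for every $\bar x\in K$ there exists $\alpha(\bar x)>0$ such that $h$ is $\alpha(\bar x)$-quasiconvex at $\bar x$. *)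

theory Defs
  imports "HOL-Analysis.Analysis"
begin

definition strongly_quasiconvex_on :: "('a::real_inner) set \<Rightarrow> real \<Rightarrow> ('a \<Rightarrow> real) \<Rightarrow> bool" where
  "strongly_quasiconvex_on K \<gamma> h \<longleftrightarrow>
     (\<forall>x\<in>K. \<forall>y\<in>K. \<forall>t::real. 0 \<le> t \<and> t \<le> 1 \<longrightarrow>
        h (t *\<^sub>R y + (1 - t) *\<^sub>R x) \<le> max (h y) (h x) - t * (1 - t) * (\<gamma> / 2) * (norm (x - y))\<^sup>2)"

definition sublevel :: "'a set \<Rightarrow> ('a \<Rightarrow> real) \<Rightarrow> real \<Rightarrow> 'a set" where
  "sublevel K h t = {x\<in>K. h x \<le> t}"

definition alpha_quasiconvex_at :: "('a::real_inner) set \<Rightarrow> real \<Rightarrow> ('a \<Rightarrow> real) \<Rightarrow> 'a \<Rightarrow> bool" where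
  "alpha_quasiconvex_at K \<alpha> h xb \<longleftrightarrow>
     (\<exists>\<rho>>0. \<exists>e. norm e = 1 \<and>
        (\<forall>y\<in>K \<inter> ball xb \<rho> \<inter> sublevel K h (h xb). e \<bullet> (y - xb) \<ge> \<alpha> * (norm (y - xb))\<^sup>2))"

definition CFZ_strongly_quasiconvex_on :: "('a::real_inner) set \<Rightarrow> ('a \<Rightarrow> real) \<Rightarrow> bool" where
  "CFZ_strongly_quasiconvex_on K h \<longleftrightarrow>
     (\<forall>xb\<in>K. \<exists>\<alpha>>0. alpha_quasiconvex_at K \<alpha> h xb)"

definition C1_on :: "('a::real_inner) set \<Rightarrow> ('a \<Rightarrow> real) \<Rightarrow> bool" where
  "C1_on K h \<longleftrightarrow> (\<exists>g. (\<forall>x\<in>K. (h has_derivative (\<lambda>v. g x \<bullet> v)) (at x)) \<and> continuous_on K g)"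

end

theory Submission
  imports Defs
begin

lemma key_ineq:
  fixes K :: "(real ^ 'n) set" and h :: "real ^ 'n \<Rightarrow> real"
  assumes sq: "strongly_quasiconvex_on K \<gamma> h"
    and der: "(h has_derivative (\<lambda>v. g \<bullet> v)) (at x)"
    and xK: "x \<in> K" and yK: "y \<in> K" and hy: "h y \<le> h x"
  shows "g \<bullet> (y - x) \<le> - (\<gamma>/2) * (norm (y - x))\<^sup>2"
proof -
  define d where "d = y - x"
  define c where "c = (\<gamma>/2) * (norm d)\<^sup>2"
  have lin: "((\<lambda>t::real. x + t *\<^sub>R d) has_derivative (\<lambda>t. t *\<^sub>R d)) (at 0)"
    by (auto intro!: derivative_eq_intros)
  have d0: "((\<lambda>t::real. h (x + t *\<^sub>R d)) has_derivative (\<lambda>t. g \<bullet> (t *\<^sub>R d))) (at 0)"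
    using has_derivative_compose[OF lin, of h "\<lambda>v. g \<bullet> v"] der by simp
  have "((\<lambda>t::real. h (x + t *\<^sub>R d)) has_real_derivative (g \<bullet> d)) (at 0)"
    proof -
    have "(*) (g \<bullet> d) = (\<lambda>t. t * (g \<bullet> d))" by (auto simp: fun_eq_iff)
    thus ?thesis using d0 unfolding has_field_derivative_def by simp
  qed
  hence lim: "((\<lambda>t. (h (x + t *\<^sub>R d) - h x) / t) \<longlongrightarrow> g \<bullet> d) (at 0)"
    unfolding DERIV_def by simp
  hence lim': "((\<lambda>t. (h (x + t *\<^sub>R d) - h x) / t) \<longlongrightarrow> g \<bullet> d) (at_right 0)"
    by (simp add: filterlim_at_split)
  have lim2: "((\<lambda>t::real. - (1 - t) * c) \<longlongrightarrow> - (1 - 0) * c) (at_right 0)"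
    by (intro tendsto_intros)
  have ev: "\<forall>\<^sub>F t in at_right 0. (h (x + t *\<^sub>R d) - h x) / t \<le> - (1 - t) * c"
  proof -
    have "\<forall>\<^sub>F t in at_right (0::real). t < 1"
      by (rule eventually_at_rightI[of 0 1]) auto
    moreover have "\<forall>\<^sub>F t in at_right (0::real). t > 0"
      by (simp add: eventually_at_right_less)
    ultimately show ?thesis
    proof (rule eventually_elim2)
      fix t :: real assume t1: "t < 1" and t0: "0 < t"
      have A: "h (t *\<^sub>R y + (1 - t) *\<^sub>R x) \<le> max (h y) (h x) - t * (1 - t) * (\<gamma> / 2) * (norm (x - y))\<^sup>2"
        using sq xK yK t0 t1 unfolding strongly_quasiconvex_on_def by auto
      have B: "t *\<^sub>R y + (1 - t) *\<^sub>R x = x + t *\<^sub>R d"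
        by (simp add: d_def algebra_simps)
      have C: "norm (x - y) = norm d" by (simp add: d_def norm_minus_commute)
      have "h (x + t *\<^sub>R d) - h x \<le> t * (- (1 - t) * c)"
      proof -
        have m: "max (h y) (h x) = h x" using hy by simp
        have e: "t * (- (1 - t) * c) = - (t * (1 - t) * (\<gamma> / 2) * (norm d)\<^sup>2)" unfolding c_def by (simp add: field_simps)
        show ?thesis using A B C m e by simp
      qed
      thus "(h (x + t *\<^sub>R d) - h x) / t \<le> - (1 - t) * c"
        using t0 by (metis pos_divide_le_eq mult.commute)
    qed
  qed
  have "g \<bullet> d \<le> - (1 - 0) * c"
    using tendsto_le[OF trivial_limit_at_right_real lim2 lim' ev] .
  thus ?thesis by (simp add: c_def d_def)
qed

theorem mainTheorem2:
  fixes K :: "(real ^ 'n) set" and h :: "real ^ 'n \<Rightarrow> real" and \<gamma> :: real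
  assumes "K \<noteq> {}" and "open K" and "convex K"
    and "C1_on K h"
    and "\<gamma> > 0" and "strongly_quasiconvex_on K \<gamma> h"
  shows "CFZ_strongly_quasiconvex_on K h"
  unfolding CFZ_strongly_quasiconvex_on_def
proof
  fix xb assume xb: "xb \<in> K"
  obtain g where g: "\<And>x. x \<in> K \<Longrightarrow> (h has_derivative (\<lambda>v. g x \<bullet> v)) (at x)"
    using assms(4) unfolding C1_on_def by blast
  have ki: "\<And>y. y \<in> sublevel K h (h xb) \<Longrightarrow> g xb \<bullet> (y - xb) \<le> - (\<gamma>/2) * (norm (y - xb))\<^sup>2"
    using key_ineq[OF assms(6) g[OF xb] xb] unfolding sublevel_def by auto
  show "\<exists>\<alpha>>0. alpha_quasiconvex_at K \<alpha> h xb"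
  proof (cases "g xb = 0")
    case True
    obtain i :: 'n where True by blast
    have ne: "norm (axis i (1::real)) = 1" by simp
    have "\<forall>y\<in>K \<inter> ball xb 1 \<inter> sublevel K h (h xb). axis i 1 \<bullet> (y - xb) \<ge> 1 * (norm (y - xb))\<^sup>2"
    proof
      fix y assume "y \<in> K \<inter> ball xb 1 \<inter> sublevel K h (h xb)"
      hence "0 \<le> - (\<gamma>/2) * (norm (y - xb))\<^sup>2" using ki True by auto
      hence "norm (y - xb) = 0" using assms(5)
      proof -
        have "(\<gamma>/2) * (norm (y - xb))\<^sup>2 \<le> 0" using \<open>0 \<le> _\<close> by linarith
        hence "(norm (y - xb))\<^sup>2 \<le> 0" using assms(5) by (simp add: mult_le_0_iff)
        thus ?thesis by simp
      qed
      thus "axis i 1 \<bullet> (y - xb) \<ge> 1 * (norm (y - xb))\<^sup>2" by simp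
    qed
    thus ?thesis unfolding alpha_quasiconvex_at_def using ne
      by (intro exI[of _ "1::real"] conjI exI[of _ "axis i 1"]) auto
  next
    case False
    define e where "e = - (1 / norm (g xb)) *\<^sub>R g xb"
    define a where "a = \<gamma> / (2 * norm (g xb))"
    have np: "norm (g xb) > 0" using False by simp
    have ne: "norm e = 1" using np by (simp add: e_def)
    have "\<forall>y\<in>K \<inter> ball xb 1 \<inter> sublevel K h (h xb). e \<bullet> (y - xb) \<ge> a * (norm (y - xb))\<^sup>2"
    proof
      fix y assume "y \<in> K \<inter> ball xb 1 \<inter> sublevel K h (h xb)"
      hence k: "g xb \<bullet> (y - xb) \<le> - (\<gamma>/2) * (norm (y - xb))\<^sup>2" using ki by auto
      have "e \<bullet> (y - xb) = - (g xb \<bullet> (y - xb)) / norm (g xb)" by (simp add: e_def)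
      also have "\<dots> \<ge> ((\<gamma>/2) * (norm (y - xb))\<^sup>2) / norm (g xb)"
        using k np by (intro divide_right_mono) auto
      finally show "e \<bullet> (y - xb) \<ge> a * (norm (y - xb))\<^sup>2" by (simp add: a_def)
    qed
    moreover have "a > 0" using np assms(5) by (simp add: a_def)
    ultimately show ?thesis unfolding alpha_quasiconvex_at_def using ne
      by (intro exI[of _ a] conjI exI[of _ "1::real"] exI[of _ e]) auto
  qed
qed

end
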